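(* Let $\lambda\in(0,1)$ and $\Lambda=1-2\lambda^2$. A nonconstant meromorphic solution $\nabla$ of the differential equation $\big[\tfrac98(\nabla')^2+\Lambda(\nabla-1)\big]^2=\nabla(\nabla-1)^2(4\nabla-3)^2$ can have no zeros.
   Context: Here $\nabla$ denotes an unknown meromorphic function of a complex variable (on a connected open subset of $\mathbb{C}$), not an operator; $\nabla'$ is its derivative. *)

theory Defs
  imports "HOL-Complex_Analysis.Complex_Analysis"
begin

end

theory Submission
  imports Defs
begin

lemma fps_key:
  fixes P :: "complex fps" and L :: complex
  assumes P0: "P \<noteq> 0" "P $ 0 = 0"
    and eq: "(fps_const (9/8) * (fps_deriv P)^2 + fps_const L * (P - 1))^2
             = P * (P - 1)^2 * (fps_const 4 * P - 3)^2"
  shows False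
proof -
  define m where "m = subdegree P"
  have m0: "m > 0" using P0 subdegree_eq_0_iff[of P] by (simp add: m_def)
  define G where "G = fps_const (9/8) * (fps_deriv P)^2 + fps_const L * (P - 1)"
  have A: "(P - 1) $ 0 \<noteq> 0" using P0 by simp
  have A': "P - 1 \<noteq> 0" using A by (metis fps_zero_nth)
  have B: "(fps_const 4 * P - 3) $ 0 \<noteq> 0" using P0 by (simp add: numeral_fps_const)
  have B': "fps_const 4 * P - 3 \<noteq> 0" using B by (metis fps_zero_nth)
  have sA: "subdegree (P - 1) = 0" using A by simp
  have sB: "subdegree (fps_const 4 * P - 3) = 0" using B by simp
  have R0: "P * (P - 1)^2 * (fps_const 4 * P - 3)^2 \<noteq> 0" using P0 A' B' by simp
  have sR: "subdegree (P * (P - 1)^2 * (fps_const 4 * P - 3)^2) = m"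
    using P0 A' B' sA sB by (simp add: m_def)
  have G0: "G \<noteq> 0" using R0 eq G_def by auto
  have sG: "m = 2 * subdegree G" proof - have "subdegree (G^2) = m" using eq sR by (simp add: G_def[symmetric]) then show ?thesis using G0 by (simp only: subdegree_power) qed
  hence m2: "m \<ge> 2" using m0 by simp
  have P1: "P $ 1 = 0" using m2 by (intro nth_less_subdegree_zero) (simp add: m_def)
  have G00: "G $ 0 = - L" using P0 P1 by (simp add: G_def fps_nth_power_0)
  show False
  proof (cases "L = 0")
    case False
    then have "subdegree G = 0" using G00 by simp
    then show False using sG m0 by simp
  next
    case True
    have sD: "subdegree (fps_deriv P) = m - 1"
    proof (rule subdegreeI)
      have "P $ m \<noteq> 0" using P0 by (simp add: m_def)
      then show "fps_deriv P $ (m - 1) \<noteq> 0" using m0 by simp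
    next
      fix i assume "i < m - 1"
      then have "P $ (i+1) = 0" by (intro nth_less_subdegree_zero) (simp add: m_def)
      then show "fps_deriv P $ i = 0" by simp
    qed
    have D0: "fps_deriv P \<noteq> 0" using sD m2 by (metis P0(1) fps_deriv_eq_0_iff fps_const_0_eq_0 fps_const_nonzero_eq_nonzero m_def numeral_1_eq_Suc_0 numerals(1) subdegree_fps_const Suc_1 diff_is_0_eq not_numeral_le_zero)
    have "G = fps_const (9/8) * (fps_deriv P)^2" using True by (simp add: G_def)
    then have "subdegree G = 2 * (m - 1)" using D0 sD by simp
    then show False using sG m2 by simp
  qed
qed

lemma main:
  fixes Lam :: real and f :: "complex \<Rightarrow> complex" and D :: "complex set"
  assumes "open D" and "connected D"
    and mero: "f meromorphic_on D"
    and nc: "\<not> (\<exists>c. \<forall>z\<in>D. f analytic_on {z} \<longrightarrow> f z = c)"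
    and ode: "\<forall>z\<in>D. f analytic_on {z} \<longrightarrow>
           (9/8 * (deriv f z)\<^sup>2 + of_real Lam * (f z - 1))\<^sup>2
             = f z * (f z - 1)\<^sup>2 * (4 * f z - 3)\<^sup>2"
    and z0: "z0 \<in> D" and lim: "(f \<longlongrightarrow> 0) (at z0)"
  shows False
proof -
  have iso: "isolated_singularity_at f z0"
    using mero z0 meromorphic_on_isolated_singularity meromorphic_on_subset[of f D "{z0}"] by blast
  obtain r1 where r1: "r1 > 0" "f analytic_on ball z0 r1 - {z0}"
    using iso unfolding isolated_singularity_at_def by blast
  obtain r2 where r2: "r2 > 0" "ball z0 r2 \<subseteq> D"
    using assms(1) z0 openE by blast
  define r where "r = min r1 r2"
  have r: "r > 0" "f analytic_on ball z0 r - {z0}" "ball z0 r \<subseteq> D"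
    using r1 r2 unfolding r_def
    by (auto intro: analytic_on_subset)
  define F where "F = laurent_expansion f z0"
  have hasF: "(\<lambda>w. f (z0 + w)) has_laurent_expansion F"
    unfolding F_def using mero z0 by (rule meromorphic_on_imp_has_laurent_expansion)
  have F0: "F \<noteq> 0"
  proof
    assume "F = 0"
    then have ev0: "eventually (\<lambda>z. f z = 0) (at z0)"
      using has_laurent_expansion_eventually_zero_iff[OF hasF] by simp
    have "eventually (\<lambda>z. remove_sings f z = 0) (at z0)"
      using ev0 eventually_remove_sings_eq_at[OF iso] by eventually_elim auto
    then have "frequently (\<lambda>z. remove_sings f z = 0) (at z0)"
      by (simp add: eventually_frequently)
    then have all0: "\<And>w. w \<in> D \<Longrightarrow> remove_sings f w = 0"
      using frequently_eq_meromorphic_imp_constant[of "remove_sings f" 0 z0 D]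
        remove_sings_nicely_meromorphic[OF mero] assms(1,2) z0 by blast
    have "\<forall>z\<in>D. f analytic_on {z} \<longrightarrow> f z = 0"
      using all0 remove_sings_at_analytic by metis
    then show False using nc by blast
  qed
  have sub: "fls_subdegree F > 0"
    using tendsto_0_subdegree_iff[OF hasF F0] lim by simp
  have ev: "eventually (\<lambda>w. w \<in> ball 0 r - {0}) (at (0::complex))"
    using r(1) by (intro eventually_at_in_open) auto
  have hasD: "(\<lambda>w. deriv f (z0 + w)) has_laurent_expansion fls_deriv F"
  proof (rule has_laurent_expansion_deriv'[OF hasF, of "ball (0::complex) r"])
    fix x :: complex assume x: "x \<in> ball 0 r - {0}"
    then have "z0 + x \<in> ball z0 r - {z0}" by (simp add: dist_norm)
    then have "f analytic_on {z0 + x}" using analytic_on_subset[OF r(2)] by simp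
    then have d: "(f has_field_derivative deriv f (z0 + x)) (at (z0 + x))"
      by (simp add: analytic_on_imp_differentiable_at DERIV_deriv_iff_field_differentiable)
    have e1: "z0 + x = x + z0" by (rule add.commute)
    have e2: "(\<lambda>w. f (z0 + w)) = (\<lambda>w. f (w + z0))" by (simp add: add.commute)
    show "((\<lambda>w. f (z0 + w)) has_field_derivative deriv f (z0 + x)) (at x)"
      using d unfolding e2 e1 DERIV_shift .
  qed (use r(1) in auto)
  have hasL: "(\<lambda>w. (9/8 * (deriv f (z0 + w))\<^sup>2 + of_real Lam * (f (z0 + w) - 1))\<^sup>2)
      has_laurent_expansion (fls_const (9/8) * (fls_deriv F)^2 + fls_const (of_real Lam) * (F - 1))^2"
    by (intro has_laurent_expansion_power has_laurent_expansion_add has_laurent_expansion_mult has_laurent_expansion_cmult_left has_laurent_expansion_diff hasF hasD has_laurent_expansion_1 has_laurent_expansion_numeral)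
  have hasR: "(\<lambda>w. f (z0 + w) * (f (z0 + w) - 1)\<^sup>2 * (4 * f (z0 + w) - 3)\<^sup>2)
      has_laurent_expansion F * (F - 1)^2 * (fls_const 4 * F - 3)^2"
    by (intro has_laurent_expansion_power has_laurent_expansion_add has_laurent_expansion_mult has_laurent_expansion_cmult_left has_laurent_expansion_diff hasF hasD has_laurent_expansion_1 has_laurent_expansion_numeral)
  have "eventually (\<lambda>w. (9/8 * (deriv f (z0 + w))\<^sup>2 + of_real Lam * (f (z0 + w) - 1))\<^sup>2
        = f (z0 + w) * (f (z0 + w) - 1)\<^sup>2 * (4 * f (z0 + w) - 3)\<^sup>2) (at 0)"
    using ev
  proof eventually_elim
    case (elim w)
    then have "z0 + w \<in> ball z0 r - {z0}" by (simp add: dist_norm)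
    then have "f analytic_on {z0 + w}" "z0 + w \<in> D" using analytic_on_subset[OF r(2)] r(3) by auto
    then show ?case using ode by blast
  qed
  note evq = this
  have hasL': "(\<lambda>w. f (z0 + w) * (f (z0 + w) - 1)\<^sup>2 * (4 * f (z0 + w) - 3)\<^sup>2)
      has_laurent_expansion (fls_const (9/8) * (fls_deriv F)^2 + fls_const (of_real Lam) * (F - 1))^2"
    using hasL has_laurent_expansion_cong[OF evq refl] by simp
  have feq: "(fls_const (9/8) * (fls_deriv F)^2 + fls_const (of_real Lam) * (F - 1))^2
           = F * (F - 1)^2 * (fls_const 4 * F - 3)^2"
    using has_laurent_expansion_unique[OF hasL' hasR] .
  define P where "P = fls_regpart F"
  have FP: "F = fps_to_fls P" using sub by (simp add: P_def)
  have P0: "P \<noteq> 0" using F0 FP by auto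
  have P00: "P $ 0 = 0"
  proof -
    have "fls_subdegree (fps_to_fls P) > 0" using sub FP by simp
    then have "subdegree P > 0" by (simp add: fls_subdegree_fls_to_fps)
    then show ?thesis by (intro nth_less_subdegree_zero)
  qed
  have "fps_to_fls ((fps_const (9/8) * (fps_deriv P)^2 + fps_const (of_real Lam) * (P - 1))^2)
      = fps_to_fls (P * (P - 1)^2 * (fps_const 4 * P - 3)^2)"
    using feq unfolding FP
    by (simp add: fls_times_fps_to_fls fps_to_fls_power fls_deriv_fps_to_fls)
  then have "(fps_const (9/8) * (fps_deriv P)^2 + fps_const (of_real Lam) * (P - 1))^2
      = P * (P - 1)^2 * (fps_const 4 * P - 3)^2" by simp
  then show False using fps_key[OF P0 P00] by blast
qed

theorem theorem9:
  fixes lam :: real and Lam :: real and f :: "complex \<Rightarrow> complex" and D :: "complex set"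
  assumes "0 < lam" and "lam < 1"
    and "Lam = 1 - 2 * lam\<^sup>2"
    and "open D" and "connected D"
    and "f meromorphic_on D"
    and "\<not> (\<exists>c. \<forall>z\<in>D. f analytic_on {z} \<longrightarrow> f z = c)"
    and "\<forall>z\<in>D. f analytic_on {z} \<longrightarrow>
           (9/8 * (deriv f z)\<^sup>2 + of_real Lam * (f z - 1))\<^sup>2
             = f z * (f z - 1)\<^sup>2 * (4 * f z - 3)\<^sup>2"
  shows "\<not> (\<exists>z\<in>D. (f \<longlongrightarrow> 0) (at z))"
  using main[of D f Lam] assms by blast

end
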